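(* Let $A$ be an associative algebra over a field $K$ with $A_0=\{0\}$. Then every weak multiplier of $A$ is a linear multiplier: $M(A)=M'(A)=LM(A)=LM'(A)$.
   Context: A map $T:A\to A$ (not assumed linear) is a weak multiplier if $xT(y)=T(x)y$ for all $x,y\in A$, and a multiplier if $xT(y)=T(xy)=T(x)y$ for all $x,y\in A$. $M(A)$, $M'(A)$ are the sets of multipliers and weak multipliers; $LM(A)$, $LM'(A)$ their subsets of $K$-linear maps. $A_0=\mathrm{Ann}_l(A)\cap\mathrm{Ann}_r(A)$ with $\mathrm{Ann}_l(A)=\{a: ax=0\ \forall x\}$, $\mathrm{Ann}_r(A)=\{a: xa=0\ \forall x\}$. *)

theory Defs
  imports Complex_Main
begin

definition assoc_algebra :: "('k::field \<Rightarrow> 'a::ring \<Rightarrow> 'a) \<Rightarrow> bool" where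
  "assoc_algebra s \<longleftrightarrow> vector_space s \<and>
     (\<forall>k x y. s k (x * y) = s k x * y \<and> s k (x * y) = x * s k y)"

definition ann_l :: "'a::ring set" where
  "ann_l = {a. \<forall>x. a * x = 0}"

definition ann_r :: "'a::ring set" where
  "ann_r = {a. \<forall>x. x * a = 0}"

definition A0 :: "'a::ring set" where
  "A0 = ann_l \<inter> ann_r"

definition weak_multiplier :: "('a::ring \<Rightarrow> 'a) \<Rightarrow> bool" where
  "weak_multiplier T \<longleftrightarrow> (\<forall>x y. x * T y = T x * y)"

definition multiplier :: "('a::ring \<Rightarrow> 'a) \<Rightarrow> bool" where
  "multiplier T \<longleftrightarrow> (\<forall>x y. x * T y = T (x * y) \<and> T (x * y) = T x * y)"

definition M :: "('a::ring \<Rightarrow> 'a) set" where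
  "M = {T. multiplier T}"

definition M' :: "('a::ring \<Rightarrow> 'a) set" where
  "M' = {T. weak_multiplier T}"

definition LM :: "('k::field \<Rightarrow> 'a::ring \<Rightarrow> 'a) \<Rightarrow> ('a \<Rightarrow> 'a) set" where
  "LM s = {T. multiplier T \<and> Vector_Spaces.linear s s T}"

definition LM' :: "('k::field \<Rightarrow> 'a::ring \<Rightarrow> 'a) \<Rightarrow> ('a \<Rightarrow> 'a) set" where
  "LM' s = {T. weak_multiplier T \<and> Vector_Spaces.linear s s T}"

end

theory Submission
  imports Defs
begin

lemma zero_of_A0:
  fixes d :: "'a::ring"
  assumes "(A0 :: 'a set) = {0}" "\<And>z. z * d = 0" "\<And>z. d * z = 0"
  shows "d = 0"
proof -
  have "d \<in> A0" using assms(2,3) by (simp add: A0_def ann_l_def ann_r_def)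
  thus ?thesis using assms(1) by blast
qed

lemma weak_is_mult:
  fixes T :: "'a::ring \<Rightarrow> 'a"
  assumes A: "(A0 :: 'a set) = {0}" and w: "weak_multiplier T"
  shows "multiplier T"
proof -
  have w': "\<And>x y. x * T y = T x * y" using w by (simp add: weak_multiplier_def)
  have "T (x * y) = x * T y" for x y
  proof -
    have "T (x * y) - x * T y = 0"
    proof (rule zero_of_A0[OF A])
      fix z
      have "z * T (x * y) = T z * x * y" using w' by (simp add: mult.assoc)
      also have "\<dots> = z * (x * T y)" using w' by (metis mult.assoc)
      finally show "z * (T (x * y) - x * T y) = 0" by (simp add: right_diff_distrib)
      have "T (x * y) * z = x * y * T z" using w' by simp
      also have "\<dots> = x * T y * z" using w' by (metis mult.assoc)
      finally show "(T (x * y) - x * T y) * z = 0" by (simp add: left_diff_distrib)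
    qed
    thus ?thesis by simp
  qed
  thus ?thesis unfolding multiplier_def using w' by simp
qed

lemma weak_is_linear:
  fixes T :: "'a::ring \<Rightarrow> 'a" and s :: "'k::field \<Rightarrow> 'a \<Rightarrow> 'a"
  assumes alg: "assoc_algebra s" and A: "(A0 :: 'a set) = {0}" and w: "weak_multiplier T"
  shows "Vector_Spaces.linear s s T"
proof -
  have w': "\<And>x y. x * T y = T x * y" using w by (simp add: weak_multiplier_def)
  have vs: "vector_space s" and sc: "\<And>k x y. s k (x * y) = s k x * y" "\<And>k x y. s k (x * y) = x * s k y"
    using alg unfolding assoc_algebra_def by metis+
  have add: "T (x + y) = T x + T y" for x y
  proof -
    have "T (x + y) - T x - T y = 0"
    proof (rule zero_of_A0[OF A])
      fix z
      have "z * T (x + y) = T z * (x + y)" using w' by simp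
      also have "\<dots> = z * T x + z * T y" using w' by (metis distrib_left)
      finally show "z * (T (x + y) - T x - T y) = 0" by (simp add: right_diff_distrib)
      have "T (x + y) * z = (x + y) * T z" using w' by simp
      also have "\<dots> = T x * z + T y * z" using w' by (metis distrib_right)
      finally show "(T (x + y) - T x - T y) * z = 0" by (simp add: left_diff_distrib)
    qed
    thus ?thesis by (simp add: algebra_simps)
  qed
  have scl: "T (s k x) = s k (T x)" for k x
  proof -
    have "T (s k x) - s k (T x) = 0"
    proof (rule zero_of_A0[OF A])
      fix z
      have "z * T (s k x) = T z * s k x" using w' by simp
      also have "\<dots> = s k (T z * x)" using sc by metis
      also have "\<dots> = s k (z * T x)" using w' by simp
      also have "\<dots> = z * s k (T x)" using sc by metis
      finally show "z * (T (s k x) - s k (T x)) = 0" by (simp add: right_diff_distrib)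
      have "T (s k x) * z = s k x * T z" using w' by simp
      also have "\<dots> = s k (x * T z)" using sc by metis
      also have "\<dots> = s k (T x * z)" using w' by simp
      also have "\<dots> = s k (T x) * z" using sc by metis
      finally show "(T (s k x) - s k (T x)) * z = 0" by (simp add: left_diff_distrib)
    qed
    thus ?thesis by simp
  qed
  show ?thesis using vs add scl by (simp add: Vector_Spaces.linear_iff)
qed

theorem proposition5p1:
  fixes s :: "'k::field \<Rightarrow> 'a::ring \<Rightarrow> 'a"
  assumes "assoc_algebra s"
    and "(A0 :: 'a set) = {0}"
  shows "(M :: ('a \<Rightarrow> 'a) set) = M' \<and> (M' :: ('a \<Rightarrow> 'a) set) = LM s \<and> LM s = LM' s"
proof -
  have mw: "multiplier T \<Longrightarrow> weak_multiplier T" for T :: "'a \<Rightarrow> 'a"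
    by (simp add: multiplier_def weak_multiplier_def)
  show ?thesis
    unfolding M_def M'_def LM_def LM'_def
    using mw weak_is_mult[OF assms(2)] weak_is_linear[OF assms] by blast
qed

end
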